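(* Let $G$ be a tight graph with dense set $T$ and co-components $G_1,\dots,G_r$, let $T_i=T\cap V(G_i)$, $m_i=|T_i|$, and let $p_i$ be the common degree in $G_i$ of the vertices of $T_i$. Suppose $m_i=p_i+1$ for every $i$. Then each $G_i$ is a tight graph with $m(G_i)=m_i$ whose set of dense vertices is $T_i$, and $G$ has a b-colouring with exactly $m(G)$ colours if and only if every $G_i$ has a b-colouring with exactly $m(G_i)$ colours.
   Context: A co-component of $G$ is the subgraph of $G$ induced by the vertex set of a connected component of the complement $\overline{G}$; distinct co-components are completely joined in $G$. A colouring of $G$ is a map $c:V(G)\to\mathbb{Z}^+$ with adjacent vertices receiving distinct colours. A vertex is b-chromatic under $c$ if it is adjacent to a vertex of every colour used by $c$ other than its own; a b-colouring is a colouring in which every colour class has a b-chromatic vertex. $m(G)$ is the largest $k$ such that $G$ has at least $k$ vertices of degree at least $k-1$; a vertex of degree at least $m(G)-1$ is dense; $G$ is tight if it has exactly $m(G)$ dense vertices, each of degree exactly $m(G)-1$. (For a tight graph, all vertices of $T_i$ have the same degree in $G_i$.) *)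

theory Defs
  imports Main
begin

definition simple_graph :: "'a set \<Rightarrow> ('a \<Rightarrow> 'a \<Rightarrow> bool) \<Rightarrow> bool" where
  "simple_graph V E \<longleftrightarrow> finite V \<and> (\<forall>x y. E x y \<longrightarrow> x \<in> V \<and> y \<in> V)
     \<and> (\<forall>x y. E x y \<longrightarrow> E y x) \<and> (\<forall>x. \<not> E x x)"

definition induced :: "('a \<Rightarrow> 'a \<Rightarrow> bool) \<Rightarrow> 'a set \<Rightarrow> 'a \<Rightarrow> 'a \<Rightarrow> bool" where
  "induced E S = (\<lambda>x y. E x y \<and> x \<in> S \<and> y \<in> S)"

definition degree :: "'a set \<Rightarrow> ('a \<Rightarrow> 'a \<Rightarrow> bool) \<Rightarrow> 'a \<Rightarrow> nat" where
  "degree V E v = card {u \<in> V. E v u}"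

definition m_index :: "'a set \<Rightarrow> ('a \<Rightarrow> 'a \<Rightarrow> bool) \<Rightarrow> nat" where
  "m_index V E = Max {k. k \<le> card V \<and> k \<le> card {v \<in> V. k - 1 \<le> degree V E v}}"

definition dense_set :: "'a set \<Rightarrow> ('a \<Rightarrow> 'a \<Rightarrow> bool) \<Rightarrow> 'a set" where
  "dense_set V E = {v \<in> V. m_index V E - 1 \<le> degree V E v}"

definition tight :: "'a set \<Rightarrow> ('a \<Rightarrow> 'a \<Rightarrow> bool) \<Rightarrow> bool" where
  "tight V E \<longleftrightarrow> card (dense_set V E) = m_index V E
     \<and> (\<forall>v \<in> dense_set V E. degree V E v = m_index V E - 1)"

definition compl_edge :: "'a set \<Rightarrow> ('a \<Rightarrow> 'a \<Rightarrow> bool) \<Rightarrow> 'a \<Rightarrow> 'a \<Rightarrow> bool" where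
  "compl_edge V E = (\<lambda>x y. x \<in> V \<and> y \<in> V \<and> x \<noteq> y \<and> \<not> E x y)"

definition cocomponents :: "'a set \<Rightarrow> ('a \<Rightarrow> 'a \<Rightarrow> bool) \<Rightarrow> 'a set set" where
  "cocomponents V E = {C. \<exists>v \<in> V. C = {u \<in> V. (compl_edge V E)\<^sup>*\<^sup>* v u}}"

definition colouring :: "'a set \<Rightarrow> ('a \<Rightarrow> 'a \<Rightarrow> bool) \<Rightarrow> ('a \<Rightarrow> nat) \<Rightarrow> bool" where
  "colouring V E c \<longleftrightarrow> (\<forall>v \<in> V. c v > 0) \<and> (\<forall>u \<in> V. \<forall>v \<in> V. E u v \<longrightarrow> c u \<noteq> c v)"

definition b_chromatic :: "'a set \<Rightarrow> ('a \<Rightarrow> 'a \<Rightarrow> bool) \<Rightarrow> ('a \<Rightarrow> nat) \<Rightarrow> 'a \<Rightarrow> bool" where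
  "b_chromatic V E c v \<longleftrightarrow> (\<forall>k \<in> c ` V - {c v}. \<exists>u \<in> V. E v u \<and> c u = k)"

definition b_colouring :: "'a set \<Rightarrow> ('a \<Rightarrow> 'a \<Rightarrow> bool) \<Rightarrow> ('a \<Rightarrow> nat) \<Rightarrow> bool" where
  "b_colouring V E c \<longleftrightarrow> colouring V E c
     \<and> (\<forall>k \<in> c ` V. \<exists>v \<in> V. c v = k \<and> b_chromatic V E c v)"

definition has_b_colouring :: "'a set \<Rightarrow> ('a \<Rightarrow> 'a \<Rightarrow> bool) \<Rightarrow> nat \<Rightarrow> bool" where
  "has_b_colouring V E k \<longleftrightarrow> (\<exists>c. b_colouring V E c \<and> card (c ` V) = k)"

end

theory Submission
  imports Defs
begin

lemma m_index_eqI: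
  assumes "finite V" "k0 \<le> card V" "k0 \<le> card {v \<in> V. k0 - 1 \<le> degree V E v}"
    and "\<And>k. k \<le> card V \<Longrightarrow> k \<le> card {v \<in> V. k - 1 \<le> degree V E v} \<Longrightarrow> k \<le> k0"
  shows "m_index V E = k0"
  unfolding m_index_def
proof (rule Max_eqI)
  show "finite {k. k \<le> card V \<and> k \<le> card {v \<in> V. k - 1 \<le> degree V E v}}"
    by (rule finite_subset[of _ "{..card V}"]) auto
qed (use assms in auto)

lemma m_index_props:
  assumes "finite V"
  shows "m_index V E \<le> card V" "m_index V E \<le> card {v \<in> V. m_index V E - 1 \<le> degree V E v}"
proof -
  let ?S = "{k. k \<le> card V \<and> k \<le> card {v \<in> V. k - 1 \<le> degree V E v}}"
  have f: "finite ?S" by (rule finite_subset[of _ "{..card V}"]) auto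
  have "0 \<in> ?S" by simp
  hence "Max ?S \<in> ?S" using f by (intro Max_in) auto
  thus "m_index V E \<le> card V" "m_index V E \<le> card {v \<in> V. m_index V E - 1 \<le> degree V E v}"
    unfolding m_index_def by auto
qed

lemma rt_sym:
  assumes "\<And>x y. R x y \<Longrightarrow> R y x" "R\<^sup>*\<^sup>* a b" shows "R\<^sup>*\<^sup>* b a"
  using assms(2) by induction (auto intro: converse_rtranclp_into_rtranclp assms(1))

lemma cross_edge:
  assumes "C \<in> cocomponents V E" "x \<in> C" "y \<in> V" "y \<notin> C"
  shows "E x y"
proof (rule ccontr)
  assume ne: "\<not> E x y"
  from assms(1) obtain v where v: "v \<in> V" "C = {u \<in> V. (compl_edge V E)\<^sup>*\<^sup>* v u}"
    unfolding cocomponents_def by auto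
  have "x \<noteq> y" using assms by auto
  hence "compl_edge V E x y" using ne assms v unfolding compl_edge_def by auto
  hence "(compl_edge V E)\<^sup>*\<^sup>* v y" using v assms(2) by auto
  thus False using assms v by auto
qed

lemma coco_sub: "C \<in> cocomponents V E \<Longrightarrow> C \<subseteq> V"
  unfolding cocomponents_def by auto

lemma deg_split:
  assumes g: "simple_graph V E" and C: "C \<in> cocomponents V E" and x: "x \<in> C"
  shows "degree V E x = degree C (induced E C) x + (card V - card C)"
proof -
  have sub: "C \<subseteq> V" using coco_sub C .
  have fin: "finite V" using g unfolding simple_graph_def by auto
  have eq: "{u \<in> V. E x u} = {u \<in> C. induced E C x u} \<union> (V - C)"
    using sub cross_edge[OF C x] x unfolding induced_def by auto
  have "card ({u \<in> C. induced E C x u} \<union> (V - C)) = card {u \<in> C. induced E C x u} + card (V - C)"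
    by (rule card_Un_disjoint) (use fin sub in \<open>auto intro: finite_subset\<close>)
  moreover have "card (V - C) = card V - card C" using sub fin by (simp add: card_Diff_subset finite_subset)
  ultimately show ?thesis unfolding degree_def using eq by simp
qed

lemma coco_disj:
  assumes g: "simple_graph V E" and "C \<in> cocomponents V E" "D \<in> cocomponents V E" "y \<in> D" "y \<notin> C"
  shows "C \<inter> D = {}"
proof -
  let ?R = "compl_edge V E"
  have s: "\<And>x y. ?R x y \<Longrightarrow> ?R y x" using g unfolding compl_edge_def simple_graph_def by auto
  from assms(2) obtain v where v: "C = {u \<in> V. ?R\<^sup>*\<^sup>* v u}"
    unfolding cocomponents_def by auto
  from assms(3) obtain w where w: "D = {u \<in> V. ?R\<^sup>*\<^sup>* w u}"
    unfolding cocomponents_def by auto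
  show ?thesis
  proof (rule ccontr)
    assume "C \<inter> D \<noteq> {}"
    then obtain u where u: "u \<in> V" "?R\<^sup>*\<^sup>* v u" "?R\<^sup>*\<^sup>* w u" using v w by auto
    have "?R\<^sup>*\<^sup>* w y" using assms(4) w by auto
    hence "?R\<^sup>*\<^sup>* v y" using u rt_sym[OF s u(3)]
      by (meson rtranclp_trans)
    thus False using assms(4,5) v w by auto
  qed
qed

lemma complete_b:
  assumes fin: "finite V" and irr: "\<forall>x. \<not> E x x"
    and cpl: "\<forall>u\<in>V. \<forall>v\<in>V. u \<noteq> v \<longrightarrow> E u v"
  shows "has_b_colouring V E (card V)"
proof -
  obtain h where h: "bij_betw h V {0..<card V}" using ex_bij_betw_finite_nat[OF fin] by blast
  define c where "c = (\<lambda>x. Suc (h x))"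
  have inj: "inj_on c V" using h unfolding c_def bij_betw_def inj_on_def by auto
  have col: "colouring V E c" unfolding colouring_def c_def
    using inj irr unfolding c_def inj_on_def by auto
  have "b_colouring V E c" unfolding b_colouring_def
  proof (intro conjI col ballI)
    fix k assume "k \<in> c ` V"
    then obtain v where v: "v \<in> V" "c v = k" by auto
    have "b_chromatic V E c v" unfolding b_chromatic_def
    proof
      fix k' assume "k' \<in> c ` V - {c v}"
      then obtain u where u: "u \<in> V" "c u = k'" "u \<noteq> v" by auto
      have "E v u" using cpl u(1,3) v(1) by metis
      thus "\<exists>u\<in>V. E v u \<and> c u = k'" using u by blast
    qed
    thus "\<exists>v\<in>V. c v = k \<and> b_chromatic V E c v" using v by blast
  qed
  moreover have "card (c ` V) = card V" using card_image[OF inj] .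
  ultimately show ?thesis unfolding has_b_colouring_def by blast
qed

lemma coco_facts:
  assumes g: "simple_graph V E" and t: "tight V E" and C: "C \<in> cocomponents V E"
    and p: "\<forall>v \<in> dense_set V E \<inter> C. degree C (induced E C) v = p"
    and pc: "card (dense_set V E \<inter> C) = p + 1"
  shows "tight C (induced E C) \<and> m_index C (induced E C) = card (dense_set V E \<inter> C)
          \<and> dense_set C (induced E C) = dense_set V E \<inter> C \<and> V - C \<subseteq> dense_set V E"
proof -
  define T where "T = dense_set V E"
  define m where "m = m_index V E"
  have fin: "finite V" using g unfolding simple_graph_def by auto
  have sub: "C \<subseteq> V" using coco_sub C .
  have finC: "finite C" using fin sub finite_subset by blast
  have TV: "T \<subseteq> V" unfolding T_def dense_set_def by auto
  have finT: "finite T" using fin TV finite_subset by blast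
  have cT: "card T = m" and dT: "\<forall>v\<in>T. degree V E v = m - 1"
    using t unfolding tight_def T_def m_def by auto
  have Tdef: "\<And>v. v \<in> T \<longleftrightarrow> v \<in> V \<and> m - 1 \<le> degree V E v"
    unfolding T_def dense_set_def m_def by auto
  have "T \<inter> C \<noteq> {}" using pc unfolding T_def by auto
  then obtain t0 where t0: "t0 \<in> T" "t0 \<in> C" by auto
  have e1: "m - 1 = p + (card V - card C)"
    using dT t0 p deg_split[OF g C t0(2)] unfolding T_def by auto
  have mpos: "m \<ge> 1" using cT finT t0 by (metis card_0_eq empty_iff less_one not_le)
  have key: "\<And>u. u \<in> C \<Longrightarrow> u \<in> T \<longleftrightarrow> p \<le> degree C (induced E C) u"
    using deg_split[OF g C] Tdef e1 sub by auto
  let ?d = "degree C (induced E C)"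
  have S: "{v \<in> C. p \<le> ?d v} = T \<inter> C" using key by auto
  have mi: "m_index C (induced E C) = p + 1"
  proof (rule m_index_eqI[OF finC])
    show "p + 1 \<le> card C" using pc card_mono[OF finC] unfolding T_def[symmetric]
      by (metis Int_lower2)
    show "p + 1 \<le> card {v \<in> C. p + 1 - 1 \<le> ?d v}" using S pc T_def by simp
    fix k assume k: "k \<le> card {v \<in> C. k - 1 \<le> ?d v}"
    show "k \<le> p + 1"
    proof (rule ccontr)
      assume "\<not> k \<le> p + 1"
      hence "{v \<in> C. k - 1 \<le> ?d v} = {}" using key p unfolding T_def[symmetric] by fastforce
      hence "card {v \<in> C. k - 1 \<le> ?d v} = 0" by (simp only: card.empty)
      thus False using k \<open>\<not> k \<le> p + 1\<close> by linarith
    qed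
  qed
  have ds: "dense_set C (induced E C) = T \<inter> C"
    unfolding dense_set_def mi using S by simp
  have tC: "tight C (induced E C)" unfolding tight_def ds mi
    using pc p unfolding T_def by simp
  have "card T = card (T \<inter> C) + card (T - C)"
    using finT by (metis Diff_Diff_Int Diff_subset card_Diff_subset Int_lower1 add.commute
        card_Diff_subset_Int finite_Diff le_add_diff_inverse card_mono finite_Int)
  hence c1: "card (T - C) = card V - card C" using cT e1 pc mpos unfolding T_def[symmetric] by linarith
  have c2: "card (V - C) = card V - card C" using sub finC by (simp add: card_Diff_subset)
  have "T - C = V - C"
    by (rule card_subset_eq) (use fin TV c1 c2 in auto)
  hence "V - C \<subseteq> T" by auto
  thus ?thesis using tC mi ds pc unfolding T_def by simp
qed

theorem mainTheorem12:
  fixes V :: "'a set" and E :: "'a \<Rightarrow> 'a \<Rightarrow> bool"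
  assumes "simple_graph V E"
    and "tight V E"
    and "\<forall>C \<in> cocomponents V E. \<exists>p::nat.
           (\<forall>v \<in> dense_set V E \<inter> C. degree C (induced E C) v = p)
           \<and> card (dense_set V E \<inter> C) = p + 1"
  shows "(\<forall>C \<in> cocomponents V E.
            tight C (induced E C)
          \<and> m_index C (induced E C) = card (dense_set V E \<inter> C)
          \<and> dense_set C (induced E C) = dense_set V E \<inter> C)
       \<and> (has_b_colouring V E (m_index V E) \<longleftrightarrow>
          (\<forall>C \<in> cocomponents V E. has_b_colouring C (induced E C) (m_index C (induced E C))))"
proof -
  note g = assms(1)
  have fin: "finite V" using g unfolding simple_graph_def by auto
  have irr: "\<forall>x. \<not> E x x" using g unfolding simple_graph_def by auto
  have F: "\<And>C. C \<in> cocomponents V E \<Longrightarrow> tight C (induced E C) \<and> m_index C (induced E C) = card (dense_set V E \<inter> C)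
          \<and> dense_set C (induced E C) = dense_set V E \<inter> C \<and> V - C \<subseteq> dense_set V E"
    using coco_facts[OF g assms(2)] assms(3) by blast
  have part2: "has_b_colouring V E (m_index V E) \<longleftrightarrow>
          (\<forall>C \<in> cocomponents V E. has_b_colouring C (induced E C) (m_index C (induced E C)))"
  proof (cases "\<forall>C \<in> cocomponents V E. C = V")
    case True
    show ?thesis
    proof (cases "V = {}")
      case e: True
      have m0: "m_index V E = 0" by (rule m_index_eqI) (use e in auto)
      have "has_b_colouring V E 0" unfolding has_b_colouring_def b_colouring_def colouring_def
        using e by auto
      moreover have "cocomponents V E = {}" using e unfolding cocomponents_def by auto
      ultimately show ?thesis using m0 by simp
    next
      case False
      then obtain v where v: "v \<in> V" by auto
      have K: "{u \<in> V. (compl_edge V E)\<^sup>*\<^sup>* v u} \<in> cocomponents V E"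
        using v unfolding cocomponents_def by blast
      hence VC: "V \<in> cocomponents V E" using True by metis
      have iE: "induced E V = E" using g unfolding induced_def simple_graph_def by (intro ext) blast
      have "(\<forall>C \<in> cocomponents V E. has_b_colouring C (induced E C) (m_index C (induced E C)))
           \<longleftrightarrow> has_b_colouring V (induced E V) (m_index V (induced E V))"
        using True VC by metis
      thus ?thesis unfolding iE by simp
    qed
  next
    case False
    then obtain C where C: "C \<in> cocomponents V E" "C \<noteq> V" by auto
    then obtain y where y: "y \<in> V" "y \<notin> C" using coco_sub by blast
    define D where "D = {u \<in> V. (compl_edge V E)\<^sup>*\<^sup>* y u}"
    have D: "D \<in> cocomponents V E" using y unfolding D_def cocomponents_def by blast
    have yD: "y \<in> D" using y unfolding D_def by auto
    have "C \<inter> D = {}" using coco_disj[OF g C(1) D yD y(2)] .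
    hence VT: "V \<subseteq> dense_set V E" using F[OF C(1)] F[OF D] by blast
    hence TV: "dense_set V E = V" unfolding dense_set_def by auto
    have cT: "card V = m_index V E" and dT: "\<forall>v\<in>V. degree V E v = m_index V E - 1"
      using assms(2) TV unfolding tight_def by auto
    have cpl: "\<forall>u\<in>V. \<forall>v\<in>V. u \<noteq> v \<longrightarrow> E u v"
    proof (intro ballI impI)
      fix u v assume uv: "u \<in> V" "v \<in> V" "u \<noteq> v"
      have s: "{w \<in> V. E u w} \<subseteq> V - {u}" using irr by auto
      have "card {w \<in> V. E u w} = card (V - {u})" using dT cT uv fin
        unfolding degree_def by simp
      hence "{w \<in> V. E u w} = V - {u}" using s fin by (intro card_subset_eq) auto
      thus "E u v" using uv by auto
    qed
    have L: "has_b_colouring V E (m_index V E)" using complete_b[OF fin irr cpl] cT by simp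
    have R: "\<forall>C \<in> cocomponents V E. has_b_colouring C (induced E C) (m_index C (induced E C))"
    proof
      fix C assume C: "C \<in> cocomponents V E"
      have sub: "C \<subseteq> V" using coco_sub C .
      have "m_index C (induced E C) = card C" using F[OF C] TV sub by (simp add: Int_absorb1)
      moreover have "has_b_colouring C (induced E C) (card C)"
        by (rule complete_b) (use fin sub finite_subset irr cpl in \<open>auto simp: induced_def subsetD\<close>)
      ultimately show "has_b_colouring C (induced E C) (m_index C (induced E C))" by simp
    qed
    show ?thesis using L R by simp
  qed
  show ?thesis using F part2 by blast
qed

end
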